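(* Let $\rho$ be a fixed density operator on a $d$-dimensional Hilbert space $\mathcal{H}$, and let $\mathcal{A}_0$ be an observable (Hermitian operator) on $\mathcal{H}$ that evolves in the Heisenberg picture according to $\frac{d\mathcal{A}_t}{dt}=\mathcal{L}_t^{\dagger}(\mathcal{A}_t)$, where $\mathcal{L}_t^{\dagger}$ is the adjoint of the Liouvillian super-operator of an arbitrary dynamics, with $\mathcal{A}_t$ differentiable in $t$. Then for every $T>0$, the time needed to go from skew information $I(\rho,\mathcal{A}_0)$ to $I(\rho,\mathcal{A}_T)$ satisfies $$T\ \geq\ T_Q=\frac{\sqrt{2}\,\bigl|\sqrt{I(\rho,\mathcal{A}_T)}-\sqrt{I(\rho,\mathcal{A}_0)}\bigr|}{2\,\langle\!\langle \lVert[\sqrt{\rho},\mathcal{L}_t^{\dagger}(\mathcal{A}_t)]\rVert_{\rm HS}\rangle\!\rangle_T}$$ (whenever the time average in the denominator is nonzero).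
   Context: The (Wigner–Yanase) skew information of an observable $\mathcal{A}$ in a state $\rho$ is $I(\rho,\mathcal{A})=\frac12\lVert[\sqrt{\rho},\mathcal{A}]\rVert_{\rm HS}^2$, where $[X,Y]=XY-YX$ and $\lVert O\rVert_{\rm HS}=\sqrt{\operatorname{tr}(O^\dagger O)}$. The Liouvillian $\mathcal{L}_t$ generates $\dot\rho_t=\mathcal{L}_t(\rho_t)$ and its adjoint $\mathcal{L}_t^\dagger$ is defined by $\operatorname{tr}(\mathcal{A}\,\mathcal{L}_t(\rho))=\operatorname{tr}(\mathcal{L}_t^\dagger(\mathcal{A})\rho)$. For a function $X_t$, $\langle\!\langle X_t\rangle\!\rangle_T=\frac{1}{T}\int_0^T X_t\,dt$. *)

theory Defs
  imports "HOL-Analysis.Analysis"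
begin

text \<open>Operators on a d-dimensional Hilbert space, d = CARD('n), are d x d complex
  matrices, represented as complex ^'n^'n (product is **).\<close>

definition adj :: "complex^'n^'n \<Rightarrow> complex^'n^'n" where
  "adj A = (\<chi> i j. cnj (A $ j $ i))"

definition hermitian :: "complex^'n^'n \<Rightarrow> bool" where
  "hermitian A \<longleftrightarrow> adj A = A"

definition psd :: "complex^('n::finite)^'n \<Rightarrow> bool" where
  "psd A \<longleftrightarrow> hermitian A \<and>
     (\<forall>x :: complex^'n. 0 \<le> (\<Sum>i\<in>UNIV. \<Sum>j\<in>UNIV. cnj (x $ i) * A $ i $ j * x $ j))"

definition mtrace :: "complex^('n::finite)^'n \<Rightarrow> complex" where
  "mtrace A = (\<Sum>i\<in>UNIV. A $ i $ i)"

definition density_op :: "complex^('n::finite)^'n \<Rightarrow> bool" where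
  "density_op \<rho> \<longleftrightarrow> psd \<rho> \<and> mtrace \<rho> = 1"

definition msqrt :: "complex^('n::finite)^'n \<Rightarrow> complex^'n^'n" where
  "msqrt A = (THE B. psd B \<and> B ** B = A)"

definition commutator :: "complex^('n::finite)^'n \<Rightarrow> complex^'n^'n \<Rightarrow> complex^'n^'n" where
  "commutator X Y = X ** Y - Y ** X"

definition hs_norm :: "complex^('n::finite)^'n \<Rightarrow> real" where
  "hs_norm X = sqrt (Re (mtrace (adj X ** X)))"

definition skew_info :: "complex^('n::finite)^'n \<Rightarrow> complex^'n^'n \<Rightarrow> real" where
  "skew_info \<rho> A = (1/2) * (hs_norm (commutator (msqrt \<rho>) A))^2"

definition time_avg :: "real \<Rightarrow> (real \<Rightarrow> real) \<Rightarrow> real" where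
  "time_avg T X = (1 / T) * integral {0..T} X"

definition mscale :: "complex \<Rightarrow> complex^('n::finite)^'n \<Rightarrow> complex^'n^'n" where
  "mscale c X = (\<chi> i j. c * X $ i $ j)"

end

theory Submission
  imports Defs
begin

lemma hs_norm_eq_norm: "hs_norm (X :: complex^('n::finite)^'n) = norm X"
proof -
  have "Re (mtrace (adj X ** X)) = (\<Sum>i\<in>UNIV. \<Sum>k\<in>UNIV. (cmod (X $ k $ i))^2)"
    unfolding mtrace_def adj_def matrix_matrix_mult_def
    by (simp add: Re_sum complex_mult_cnj cmod_def power2_eq_square)
  also have "\<dots> = (\<Sum>k\<in>UNIV. (norm (X $ k))^2)"
    by (subst sum.swap) (simp add: norm_vec_def L2_set_def sum_nonneg)
  finally show ?thesis
    by (simp add: hs_norm_def norm_vec_def L2_set_def)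
qed

lemma comm_linear: "bounded_linear (commutator (S :: complex^('n::finite)^'n))"
proof -
  have "linear (commutator S)"
    by (rule linearI)
      (simp_all add: commutator_def
         vec_eq_iff matrix_matrix_mult_def sum_distrib_left sum.distrib algebra_simps scaleR_sum_right)
  then show ?thesis by (simp add: linear_conv_bounded_linear)
qed

theorem corollary2:
  fixes \<rho> :: "complex^('n::finite)^'n"
    and A :: "real \<Rightarrow> complex^'n^'n"
    and Ldag :: "real \<Rightarrow> complex^'n^'n \<Rightarrow> complex^'n^'n"
    and T :: real
  assumes rho: "density_op \<rho>"
    and herm0: "hermitian (A 0)"
    and lin: "\<And>t X Y c. Ldag t (X + Y) = Ldag t X + Ldag t Y \<and> Ldag t (mscale c X) = mscale c (Ldag t X)"
    and heis: "\<And>t. t \<in> {0..T} \<Longrightarrow> (A has_vector_derivative Ldag t (A t)) (at t within {0..T})"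
    and Tpos: "T > 0"
    and integ: "(\<lambda>t. hs_norm (commutator (msqrt \<rho>) (Ldag t (A t)))) integrable_on {0..T}"
    and nz: "time_avg T (\<lambda>t. hs_norm (commutator (msqrt \<rho>) (Ldag t (A t)))) \<noteq> 0"
  shows "T \<ge> sqrt 2 * \<bar>sqrt (skew_info \<rho> (A T)) - sqrt (skew_info \<rho> (A 0))\<bar>
               / (2 * time_avg T (\<lambda>t. hs_norm (commutator (msqrt \<rho>) (Ldag t (A t)))))"
proof -
  define S where "S = msqrt \<rho>"
  define C where "C = (\<lambda>t. commutator S (A t))"
  define C' where "C' = (\<lambda>t. commutator S (Ldag t (A t)))"
  define G where "G = integral {0..T} (\<lambda>t. hs_norm (C' t))"
  have bl: "bounded_linear (commutator S)" by (rule comm_linear)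
  have der: "(C has_vector_derivative C' t) (at t within {0..T})" if "t \<in> {0..T}" for t
    unfolding C_def C'_def using bounded_linear.has_vector_derivative[OF bl heis[OF that]] .
  have ftc: "(C' has_integral (C T - C 0)) {0..T}"
    using fundamental_theorem_of_calculus[of 0 T C C'] der Tpos by auto
  have "norm (integral {0..T} C') \<le> G"
    unfolding G_def
    apply (rule integral_norm_bound_integral)
    using ftc integ by (auto simp: C'_def S_def hs_norm_eq_norm)
  then have bound: "norm (C T - C 0) \<le> G" using ftc by (simp add: integral_unique)
  have Gnn: "G \<ge> 0" unfolding G_def
    by (rule integral_nonneg) (use integ in \<open>auto simp: C'_def S_def hs_norm_eq_norm\<close>)
  have avg: "time_avg T (\<lambda>t. hs_norm (commutator (msqrt \<rho>) (Ldag t (A t)))) = G / T"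
    by (simp add: time_avg_def G_def C'_def S_def)
  with nz Gnn have Gpos: "G > 0" by auto
  have sk: "sqrt 2 * sqrt (skew_info \<rho> X) = norm (commutator S X)" for X
    by (simp add: skew_info_def S_def hs_norm_eq_norm real_sqrt_mult[symmetric])
  have "sqrt 2 * \<bar>sqrt (skew_info \<rho> (A T)) - sqrt (skew_info \<rho> (A 0))\<bar>
      = \<bar>norm (C T) - norm (C 0)\<bar>"
    by (simp add: C_def sk[symmetric] right_diff_distrib[symmetric] abs_mult)
  also have "\<dots> \<le> norm (C T - C 0)" by (rule norm_triangle_ineq3)
  also have "\<dots> \<le> G" by (rule bound)
  finally have key: "sqrt 2 * \<bar>sqrt (skew_info \<rho> (A T)) - sqrt (skew_info \<rho> (A 0))\<bar> \<le> G" .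
  show ?thesis unfolding avg
    using key Gpos Tpos by (simp add: field_simps)
qed

end
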